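(* A ring $R$ is CSNC if and only if (1) $2\in\mathrm{Nil}(R)$, and (2) for every clean element $a\in R$ there exists an integer $k\ge 0$ such that $a^{2^k}-a^{2^{k+1}}\in\mathrm{Nil}(R)$.
   Context: All rings are associative with identity $1$. For a ring $R$, $\mathrm{Id}(R)$, $U(R)$, $\mathrm{Nil}(R)$ denote the sets of idempotents, units and nilpotent elements. An element $a\in R$ is clean if $a=e+u$ for some $e\in\mathrm{Id}(R)$, $u\in U(R)$. An element $a$ is strongly nil-clean if $a=e+q$ with $e\in \mathrm{Id}(R)$, $q\in\mathrm{Nil}(R)$ and $eq=qe$. A ring $R$ is called CSNC if every clean element of $R$ is strongly nil-clean. *)

theory Defs
  imports Main
begin

definition idem :: "'a::ring_1 \<Rightarrow> bool" where
  "idem e \<longleftrightarrow> e * e = e"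

definition unit_elem :: "'a::ring_1 \<Rightarrow> bool" where
  "unit_elem u \<longleftrightarrow> (\<exists>v. u * v = 1 \<and> v * u = 1)"

definition nilpotent :: "'a::ring_1 \<Rightarrow> bool" where
  "nilpotent q \<longleftrightarrow> (\<exists>n::nat. q ^ n = 0)"

definition clean :: "'a::ring_1 \<Rightarrow> bool" where
  "clean a \<longleftrightarrow> (\<exists>e u. idem e \<and> unit_elem u \<and> a = e + u)"

definition strongly_nil_clean :: "'a::ring_1 \<Rightarrow> bool" where
  "strongly_nil_clean a \<longleftrightarrow> (\<exists>e q. idem e \<and> nilpotent q \<and> e * q = q * e \<and> a = e + q)"

definition CSNC :: "'a::ring_1 itself \<Rightarrow> bool" where
  "CSNC _ \<longleftrightarrow> (\<forall>a::'a. clean a \<longrightarrow> strongly_nil_clean a)"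

end

theory Submission
  imports Defs
begin


lemma num_comm: "numeral n * z = z * (numeral n :: 'a::ring_1)"
  by (metis of_nat_numeral mult_of_nat_commute)

definition bic :: "'a::ring_1 \<Rightarrow> 'a \<Rightarrow> bool" where
  "bic a y \<longleftrightarrow> (\<forall>z. z * a = a * z \<longrightarrow> z * y = y * z)"

lemma bic_a: "bic a a" by (simp add: bic_def)
lemma bic_1: "bic a 1" by (simp add: bic_def)
lemma bic_0: "bic a 0" by (simp add: bic_def)
lemma bic_num: "bic a (numeral n)" by (simp add: bic_def num_comm)
lemma bic_add: "bic a x \<Longrightarrow> bic a y \<Longrightarrow> bic a (x + y)"
  by (simp add: bic_def distrib_left distrib_right)
lemma bic_diff: "bic a x \<Longrightarrow> bic a y \<Longrightarrow> bic a (x - y)"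
  by (simp add: bic_def left_diff_distrib right_diff_distrib)
lemma bic_uminus: "bic a x \<Longrightarrow> bic a (- x)"
  by (simp add: bic_def)
lemma bic_mult: "bic a x \<Longrightarrow> bic a y \<Longrightarrow> bic a (x * y)"
  unfolding bic_def by (metis mult.assoc)
lemma bic_power: "bic a x \<Longrightarrow> bic a (x ^ n)"
  by (induct n) (simp_all add: bic_1 bic_mult)
lemma bic_comm: "bic a x \<Longrightarrow> bic a y \<Longrightarrow> x * y = y * x"
  unfolding bic_def by (metis)

lemmas bic_intros = bic_a bic_1 bic_0 bic_num bic_add bic_diff bic_uminus bic_mult bic_power

lemma power_mult_comm:
  assumes xy: "(x::'a::ring_1) * y = y * x" shows "(x * y) ^ n = x ^ n * y ^ n"
proof (induct n)
  case 0 then show ?case by simp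
next
  case (Suc n)
  have c: "y ^ n * x = x * y ^ n" using power_commuting_commutes[of y x n] xy by simp
  have "(x*y)^Suc n = x ^ n * y ^ n * (x * y)" using Suc by (simp only: power_Suc2)
  also have "\<dots> = x ^ n * (y ^ n * x) * y" by (simp add: mult.assoc)
  also have "\<dots> = x ^ Suc n * y ^ Suc n" by (simp only: c mult.assoc power_Suc2)
  finally show ?case .
qed

lemma nil_mult: "nilpotent (x::'a::ring_1) \<Longrightarrow> x * y = y * x \<Longrightarrow> nilpotent (x * y)"
  unfolding nilpotent_def using power_mult_comm by (metis mult_zero_left)

lemma nil_mult2: "nilpotent (x::'a::ring_1) \<Longrightarrow> x * y = y * x \<Longrightarrow> nilpotent (y * x)"
  using nil_mult by metis

lemma add_pow_aux:
  assumes "(x::'a::ring_1) * y = y * x"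
  shows "\<exists>r. (x + y) ^ k = x ^ k + y * r \<and> r * y = y * r \<and> r * x = x * r"
proof (induct k)
  case 0 then show ?case by (intro exI[of _ 0]) simp
next
  case (Suc k)
  then obtain r where r: "(x + y) ^ k = x ^ k + y * r" "r * y = y * r" "r * x = x * r" by blast
  have xk: "x ^ k * y = y * x ^ k" using power_commuting_commutes[of x y k] assms by simp
  have xk2: "x ^ k * x = x * x ^ k" by (simp add: power_commutes)
  have "(x + y) ^ Suc k = (x + y) * (x ^ k + y * r)" using r by simp
  also have "\<dots> = x ^ Suc k + y * (x ^ k + x * r + y * r)"
    by (simp add: distrib_left distrib_right mult.assoc[symmetric] assms)
  finally show ?case
    apply (intro exI[of _ "x ^ k + x * r + y * r"])
    apply (simp add: distrib_left distrib_right r xk xk2 assms)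
    apply (metis assms mult.assoc r(2) r(3))
    done
qed

lemma nil_add:
  assumes "nilpotent (x::'a::ring_1)" "nilpotent y" "x * y = y * x"
  shows "nilpotent (x + y)"
proof -
  obtain n where n: "x ^ n = 0" using assms(1) nilpotent_def by blast
  obtain m where m: "y ^ m = 0" using assms(2) nilpotent_def by blast
  obtain r where r: "(x + y) ^ n = x ^ n + y * r" "r * y = y * r"
    using add_pow_aux[OF assms(3)] by blast
  have "(x + y) ^ (n * m) = ((x+y)^n)^m" by (simp add: power_mult)
  also have "\<dots> = (y * r) ^ m" using r n by simp
  also have "\<dots> = 0" using power_mult_comm[of y r m] r m by simp
  finally show ?thesis unfolding nilpotent_def by blast
qed


lemma numx: 
  "numeral (num.Bit0 k) * (x::'a::ring_1) = numeral k * x + numeral k * x"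
  "numeral (num.Bit1 k) * (x::'a::ring_1) = numeral k * x + numeral k * x + x"
  "numeral num.One * x = x"
  by (simp_all only: numeral_Bit0 numeral_Bit1 distrib_right mult_1_left numeral_One)
lemma
  fixes e :: "'a::ring_1"
  shows "(3*e*e - 2*e*e*e) - (3*e*e - 2*e*e*e)*(3*e*e - 2*e*e*e) = (e - e*e)*(e - e*e)*(3 + 4*(e - e*e))"
proof -
  have nl: "e * (numeral n * y) = numeral n * (e * y)" for n y
    by (metis mult.assoc num_comm)
  have nl2: "e * numeral n = numeral n * e" for n 
    by (metis num_comm)
  show ?thesis apply (simp add: algebra_simps nl nl2)
    apply (simp only: numx add.assoc)
    done
qed
lemma   fixes e :: "'a::ring_1"
  shows "(3*e*e - 2*e*e*e) - e = -((e - e*e)*(1 - 2*e))"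
proof -
  have nl: "e * (numeral n * y) = numeral n * (e * y)" for n y
    by (metis mult.assoc num_comm)
  have nl2: "e * numeral n = numeral n * e" for n 
    by (metis num_comm)
  show ?thesis  apply (simp add: algebra_simps nl nl2)
    apply (simp only: numx add.assoc)
    done
qed


lemma nl_e: "e * (numeral n * y) = numeral n * (e * (y::'a::ring_1))"
  by (metis mult.assoc num_comm)
lemma nl2_e: "e * numeral n = numeral n * (e::'a::ring_1)"
  by (metis num_comm)

lemma newton_id:
  fixes e :: "'a::ring_1"
  shows "(3*e*e - 2*e*e*e) - (3*e*e - 2*e*e*e)*(3*e*e - 2*e*e*e) = (e - e*e)*(e - e*e)*(3 + 4*(e - e*e))"
  apply (simp add: algebra_simps nl_e[where e=e] nl2_e[where e=e])
  apply (simp only: numx add.assoc)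
  done

lemma newton_id2:
  fixes e :: "'a::ring_1"
  shows "(3*e*e - 2*e*e*e) - e = -((e - e*e)*(1 - 2*e))"
  apply (simp add: algebra_simps nl_e[where e=e] nl2_e[where e=e])
  apply (simp only: numx add.assoc)
  done

lemma sq_id:
  fixes y :: "'a::ring_1"
  shows "(y - y*y)*(y - y*y) = (y*y - y*y*y*y) + 2*(y*y*y*y - y*y*y)"
  apply (simp add: algebra_simps nl_e[where e=y] nl2_e[where e=y])
  apply (simp only: numx add.assoc)
  apply (simp only: add_ac)
  done

lemma nil_uminus: "nilpotent (x::'a::ring_1) \<Longrightarrow> nilpotent (- x)"
  using nil_mult[of x "-1"] by simp

lemma nil_pow: "nilpotent (x::'a::ring_1) \<Longrightarrow> m > 0 \<Longrightarrow> nilpotent (x ^ m)"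
  unfolding nilpotent_def
proof -
  assume "\<exists>n. x ^ n = 0" "m > 0"
  then obtain n where "x ^ n = 0" by blast
  then have "(x ^ m) ^ n = 0" using \<open>m>0\<close>
    by (metis power_mult mult.commute power_0_left power_eq_0_iff zero_power)
  then show "\<exists>n. (x ^ m) ^ n = 0" by blast
qed

lemma lift:
  fixes a :: "'a::ring_1"
  assumes nt: "nilpotent (a - a*a)"
  shows "strongly_nil_clean a"
proof -
  define t where "t = a - a*a"
  have bt: "bic a t" unfolding t_def by (intro bic_intros)
  obtain n where tn: "t ^ n = 0" using nt t_def nilpotent_def by blast
  have step: "\<exists>e s. bic a e \<and> bic a s \<and> nilpotent (e - a) \<and> e - e*e = t^(2^k) * s" for k
  proof (induct k)
    case 0
    show ?case
      by (rule exI[of _ a], rule exI[of _ 1]) (auto simp: bic_intros t_def nilpotent_def intro: exI[of _ 1])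
  next
    case (Suc k)
    then obtain e s where es: "bic a e" "bic a s" "nilpotent (e - a)" "e - e*e = t^(2^k) * s" by blast
    define e' where "e' = 3*e*e - 2*e*e*e"
    have be': "bic a e'" unfolding e'_def using es by (intro bic_intros)
    have bts: "bic a (t^(2^k) * s)" using es bt by (intro bic_intros)
    have "e' - e'*e' = (e - e*e) * (e - e*e) * (3 + 4*(e - e*e))"
      unfolding e'_def by (rule newton_id)
    also have "\<dots> = (t^(2^k) * s) * (t^(2^k) * s) * (3 + 4*(t^(2^k) * s))"
      by (simp only: es(4))
    also have "\<dots> = t^(2^Suc k) * (s * s * (3 + 4*(t^(2^k) * s)))"
    proof -
      have c: "s * t^(2^k) = t^(2^k) * s" using bic_comm[OF es(2) bic_power[OF bt]] .
      have "(t^(2^k) * s) * (t^(2^k) * s) = t^(2^k) * (s * t^(2^k)) * s"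
        by (simp only: mult.assoc)
      also have "\<dots> = t^(2^k) * t^(2^k) * (s * s)"
        by (simp only: c mult.assoc)
      finally have "(t^(2^k) * s) * (t^(2^k) * s) = t^(2^k) * t^(2^k) * (s * s)" .
      moreover have "t^(2^k) * t^(2^k) = t^(2^Suc k)" by (simp add: power_add[symmetric] mult_2)
      ultimately show ?thesis by (simp only: mult.assoc)
    qed
    finally have id1: "e' - e'*e' = t^(2^Suc k) * (s * s * (3 + 4*(t^(2^k) * s)))" .
    have bs': "bic a (s * s * (3 + 4*(t^(2^k) * s)))" using es bt by (intro bic_intros)
    have nt': "nilpotent (t^(2^k))" using nil_pow[of t "2^k"] nt t_def by simp
    have "e' - e = - (t^(2^k) * (s * (1 - 2*e)))"
      unfolding e'_def newton_id2 es(4) by (simp only: mult.assoc)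
    moreover have "nilpotent (t^(2^k) * (s * (1 - 2*e)))"
      using nt' bic_comm[of a "t^(2^k)" "s * (1 - 2*e)"] bt es by (intro nil_mult) (auto intro!: bic_intros)
    ultimately have n1: "nilpotent (e' - e)" using nil_uminus by simp
    have "e' - a = (e' - e) + (e - a)" by simp
    moreover have "nilpotent ((e' - e) + (e - a))"
      using n1 es(3) bic_comm[of a "e' - e" "e - a"] be' es(1) by (intro nil_add) (auto intro!: bic_intros)
    ultimately have "nilpotent (e' - a)" by simp
    then show ?case using be' bs' id1 by blast
  qed
  obtain e s where es: "bic a e" "bic a s" "nilpotent (e - a)" "e - e*e = t^(2^n) * s"
    using step by blast
  have "t^(2^n) = t ^ n * t ^ (2^n - n)"
    by (simp add: power_add[symmetric] less_imp_le_nat[OF less_exp])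
  then have "t^(2^n) = 0" using tn by simp
  then have ie: "idem e" using es(4) unfolding idem_def by simp
  have nq: "nilpotent (a - e)" using nil_uminus[OF es(3)] by simp
  have "e * (a - e) = (a - e) * e" using bic_comm[of a e "a - e"] es(1) by (auto intro!: bic_intros)
  then show ?thesis unfolding strongly_nil_clean_def using ie nq
    by (intro exI[of _ e] exI[of _ "a - e"]) auto
qed



lemma nil_sq: "nilpotent ((z::'a::ring_1) * z) \<Longrightarrow> nilpotent z"
  unfolding nilpotent_def by (metis power2_eq_square power_mult)

lemma frob_step:
  fixes y :: "'a::ring_1"
  assumes n2: "nilpotent (2::'a)" and h: "nilpotent (y*y - y*y*y*y)"
  shows "nilpotent (y - y*y)"
proof -
  have b1: "bic y (y*y - y*y*y*y)" by (intro bic_intros)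
  have b2: "bic y (2*(y*y*y*y - y*y*y))" by (intro bic_intros)
  have "nilpotent (2*(y*y*y*y - y*y*y))"
    using n2 by (rule nil_mult) (rule num_comm)
  then have "nilpotent ((y*y - y*y*y*y) + 2*(y*y*y*y - y*y*y))"
    using h bic_comm[OF b1 b2] by (intro nil_add)
  then have "nilpotent ((y - y*y)*(y - y*y))" by (simp only: sq_id)
  then show ?thesis by (rule nil_sq)
qed

lemma frob:
  fixes a :: "'a::ring_1"
  assumes n2: "nilpotent (2::'a)"
  shows "nilpotent (a ^ (2 ^ k) - a ^ (2 ^ (k + 1))) \<Longrightarrow> nilpotent (a - a*a)"
proof (induct k)
  case 0 then show ?case by (simp add: power2_eq_square)
next
  case (Suc k)
  define y where "y = a ^ (2^k)"
  have e1: "a ^ (2 ^ (Suc k)) = y * y" unfolding y_def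
    by (simp add: power_mult[symmetric] power2_eq_square[symmetric] mult.commute)
  have "(2::nat)^(Suc k+1) = 2^k + 2^k + 2^k + 2^k" by simp
  then have e2: "a ^ (2 ^ (Suc k + 1)) = y * y * y * y" unfolding y_def
    by (simp only: power_add)
  have "nilpotent (y*y - y*y*y*y)" using Suc.prems e1 e2 by simp
  then have "nilpotent (y - y*y)" by (rule frob_step[OF n2])
  moreover have "y*y = a ^ (2^(k+1))" using e1 by simp
  ultimately show ?case using Suc.hyps y_def by simp
qed

theorem corollary2p11:
  "CSNC TYPE('a::ring_1) \<longleftrightarrow>
     (nilpotent (2::'a) \<and>
      (\<forall>a::'a. clean a \<longrightarrow> (\<exists>k::nat. nilpotent (a ^ (2 ^ k) - a ^ (2 ^ (k + 1))))))"
proof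
  assume cs: "CSNC TYPE('a)"
  have "clean (-1::'a)" unfolding clean_def idem_def unit_elem_def
    by (rule exI[of _ 0], rule exI[of _ "-1"]) (auto intro: exI[of _ "-1"])
  then have "strongly_nil_clean (-1::'a)" using cs unfolding CSNC_def by blast
  then obtain e q :: 'a where eq: "idem e" "nilpotent q" "e*q = q*e" "-1 = e + q"
    unfolding strongly_nil_clean_def by blast
  define f where "f = 1 - e"
  have qf: "q = -1 - e" using eq(4) by (simp add: algebra_simps)
  have fq: "f * q = - f" unfolding f_def qf using eq(1) unfolding idem_def
    by (simp add: algebra_simps)
  have fqn: "f * q ^ n = (-1)^n * f" for n
  proof (induct n)
    case 0 then show ?case by simp
  next
    case (Suc n)
    have "f * q ^ Suc n = (f * q ^ n) * q" by (simp only: power_Suc2 mult.assoc)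
    also have "\<dots> = (-1)^n * (f * q)" using Suc by (simp add: mult.assoc)
    also have "\<dots> = (-1)^Suc n * f" using fq by simp
    finally show ?case .
  qed
  obtain n where "q ^ n = 0" using eq(2) nilpotent_def by blast
  then have "(-1)^n * f = 0" using fqn[of n] by simp
  then have "f = 0" by (cases "even n") simp_all
  then have "(2::'a) = - q" unfolding f_def qf by (simp add: algebra_simps)
  then have n2: "nilpotent (2::'a)" using nil_uminus[OF eq(2)] by simp
  have "\<exists>k::nat. nilpotent (a ^ (2 ^ k) - a ^ (2 ^ (k + 1)))" if ca: "clean a" for a :: 'a
  proof -
    have "strongly_nil_clean a" using cs ca unfolding CSNC_def by blast
    then obtain e q :: 'a where eq: "idem e" "nilpotent q" "e*q = q*e" "a = e + q"
      unfolding strongly_nil_clean_def by blast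
    have aa: "a * a = e + e*q + e*q + q*q"
      using eq(1) unfolding eq(4) idem_def by (simp only: distrib_left distrib_right eq(3)[symmetric] add.assoc)
    have "a - a * a = q * (1 - e - e - q)"
      unfolding aa by (simp only: right_diff_distrib mult_1_right eq(3)[symmetric] eq(4)) (simp add: algebra_simps)
    moreover have "nilpotent (q * (1 - e - e - q))"
      using eq(2) by (rule nil_mult) (simp only: right_diff_distrib left_diff_distrib mult_1_left mult_1_right eq(3))
    ultimately have "nilpotent (a ^ (2 ^ 0) - a ^ (2 ^ (0 + 1)))" by (simp add: power2_eq_square)
    then show ?thesis by blast
  qed
  with n2 show "nilpotent (2::'a) \<and> (\<forall>a::'a. clean a \<longrightarrow> (\<exists>k::nat. nilpotent (a ^ (2 ^ k) - a ^ (2 ^ (k + 1)))))"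
    by blast
next
  assume h: "nilpotent (2::'a) \<and> (\<forall>a::'a. clean a \<longrightarrow> (\<exists>k::nat. nilpotent (a ^ (2 ^ k) - a ^ (2 ^ (k + 1)))))"
  show "CSNC TYPE('a)" unfolding CSNC_def
  proof (intro allI impI)
    fix a :: 'a assume "clean a"
    then obtain k where "nilpotent (a ^ (2 ^ k) - a ^ (2 ^ (k + 1)))" using h by blast
    then have "nilpotent (a - a*a)" using frob h by blast
    then show "strongly_nil_clean a" by (rule lift)
  qed
qed


end
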